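(* Let $\ell_1,\ell_2,\ell_3\in\tfrac12\mathbb{Z}_{\ge0}$ satisfy $|\ell_1-\ell_2|\le\ell_3\le\ell_1+\ell_2$ and $\ell_1+\ell_2+\ell_3\in\mathbb{Z}$, and put $n=\ell_1+\ell_2-\ell_3$. For $\rho\in\mathbb{C}$ put $q=e^{i\pi\rho}$, $$A^{\ell_1}_{n}(q)=\prod_{k=1}^{n}\frac{(1-q^{2k})\big(q^{2(\ell_1-k+1)}-q^{-2\ell_1}\big)}{1-q^2},\qquad \alpha_{n}(q)=\prod_{j=0}^{n-1}\frac{q^{-2\ell_2}-q^{2(\ell_2-j)}}{q^{2(1+\ell_1+\ell_2-n)}-q^{-2(\ell_1+\ell_2-j)}} .$$ Then, as an identity of meromorphic functions of $\rho$, $$A^{\ell_1}_{n}(q)\,\frac{\alpha_n(q)}{n!}\,S_{n}\big(1-2\ell_1\rho,\;1-2\ell_2\rho,\;\rho\big)=\frac{(2\pi i)^{n}}{n!}\prod_{k=1}^{n}\frac{\Gamma\big((\ell_1+\ell_2+\ell_3-k+2)\rho-1\big)\,\Gamma(-\rho)}{\Gamma\big((2\ell_1-k+1)\rho\big)\,\Gamma\big((2\ell_2-k+1)\rho\big)\,\Gamma(-k\rho)} .$$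
   Context: $S_n(\alpha,\beta,\gamma)$ denotes the (analytically continued) Selberg integral, i.e. the meromorphic function $$S_n(\alpha,\beta,\gamma)=\prod_{j=0}^{n-1}\frac{\Gamma(\alpha+j\gamma)\,\Gamma(\beta+j\gamma)\,\Gamma(1+(j+1)\gamma)}{\Gamma(\alpha+\beta+(n+j-1)\gamma)\,\Gamma(1+\gamma)},$$ with $S_0=1$; empty products equal $1$. *)

theory Defs
  imports "HOL-Analysis.Analysis"
begin

text \<open>Analytically continued Selberg integral, given by its Gamma-product formula
  (Gamma is the complex Gamma function; empty product = 1).\<close>
definition selberg :: "nat \<Rightarrow> complex \<Rightarrow> complex \<Rightarrow> complex \<Rightarrow> complex" where
  "selberg n a b g =
     (\<Prod>j<n. Gamma (a + of_nat j * g) * Gamma (b + of_nat j * g) * Gamma (1 + of_nat (j + 1) * g)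
             / (Gamma (a + b + of_nat (n + j - 1) * g) * Gamma (1 + g)))"

text \<open>Powers of q = exp(i pi rho): q^x := exp(i pi rho x).\<close>
definition qp :: "complex \<Rightarrow> complex \<Rightarrow> complex" where
  "qp \<rho> x = exp (\<i> * of_real pi * \<rho> * x)"

definition A_fun :: "complex \<Rightarrow> nat \<Rightarrow> complex \<Rightarrow> complex" where
  "A_fun l1 n \<rho> = (\<Prod>k=1..n. (1 - qp \<rho> (2 * of_nat k)) *
       (qp \<rho> (2 * (l1 - of_nat k + 1)) - qp \<rho> (- 2 * l1)) / (1 - qp \<rho> 2))"

definition alpha_fun :: "complex \<Rightarrow> complex \<Rightarrow> nat \<Rightarrow> complex \<Rightarrow> complex" where
  "alpha_fun l1 l2 n \<rho> = (\<Prod>j<n. (qp \<rho> (- 2 * l2) - qp \<rho> (2 * (l2 - of_nat j))) /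
       (qp \<rho> (2 * (1 + l1 + l2 - of_nat n)) - qp \<rho> (- 2 * (l1 + l2 - of_nat j))))"

end

theory Submission
  imports Defs
begin
lemma qp_diff: "qp r s - qp r t = qp r ((s+t)/2) * (2 * \<i> * sin(of_real pi*(r*((s-t)/2))))"
  unfolding qp_def sin_exp_eq
  by (simp add: mult_exp_exp field_simps)

lemma qp_mult: "qp r s * qp r t = qp r (s+t)"
  unfolding qp_def by (simp add: mult_exp_exp field_simps)

lemma qp_ne: "qp r s \<noteq> 0" unfolding qp_def by simp

lemma core:
  fixes Qk Q1k Qmj Q1 Q1nj Qph sk sa1 sa2 sc s1 F1 F2 F3 H1 H5 p :: complex
  assumes "sk \<noteq> 0" "sa1 \<noteq> 0" "sa2 \<noteq> 0" "sc \<noteq> 0" "s1 \<noteq> 0" "F1 \<noteq> 0" "F2 \<noteq> 0" "F3 \<noteq> 0"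
    "H1 \<noteq> 0" "H5 \<noteq> 0" "Q1 \<noteq> 0" "Q1nj \<noteq> 0" "p \<noteq> 0"
    "Qk*Q1k*Qmj = Qph*Q1*Q1nj"
  shows "((-(Qk*(2 * \<i> * sk)))*(Q1k*(2 * \<i> * sa1))/(-(Q1*(2 * \<i> * s1)))) * ((-(Qmj*(2 * \<i> * sa2)))/(Q1nj*(2 * \<i> * sc))) *
     ((p/(sa1*F1))*(p/(sa2*F2))*(p/(-sk*F3)) / ((p/(-sc*H1))*(p/(-s1*H5))))
   = Qph*(2*p * \<i> * (H1*H5/(F1*F2*F3)))"
proof -
  have e: "Qk*Q1k*Qmj*X = Qph*Q1*Q1nj*X" for X using assms(14) by simp
  show ?thesis using assms(1-13)
    apply (simp add: field_simps)
    using assms(14) by (simp add: algebra_simps)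
qed

lemma qp_diff2:
  assumes "s + t = 2*a" "r*(s - t) = 2*w"
  shows "qp r s - qp r t = qp r a * (2 * \<i> * sin(of_real pi*w))"
proof -
  have "(s+t)/2 = a" "r*((s-t)/2) = w" using assms by (simp_all add: field_simps)
  thus ?thesis using qp_diff[of r s t] by simp
qed

lemma refl_inst:
  fixes z y s :: complex
  assumes "1 - z = y" "Gamma z \<noteq> 0" "Gamma y \<noteq> 0" "sin (of_real pi * z) = s"
  shows "Gamma y = of_real pi / (s * Gamma z) \<and> s \<noteq> 0"
proof -
  have "Gamma z * Gamma y = of_real pi / s" using Gamma_reflection_complex[of z] assms by simp
  moreover have "s \<noteq> 0" using calculation assms(2,3) by auto
  ultimately show ?thesis using assms(2,3) by (auto simp: field_simps)
qed

lemma perj: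
  fixes l1 l2 l3 \<rho> :: complex and k j n :: nat
  assumes k: "k = Suc j" and jn: "j < n" and l3: "l3 = l1 + l2 - of_nat n"
  and nG1: "Gamma (1 - 2*l1*\<rho> + of_nat j * \<rho>) \<noteq> 0"
  and nG2: "Gamma (1 - 2*l2*\<rho> + of_nat j * \<rho>) \<noteq> 0"
  and nG3: "Gamma (1 + of_nat (j+1) * \<rho>) \<noteq> 0"
  and nG4: "Gamma ((1 - 2*l1*\<rho>) + (1 - 2*l2*\<rho>) + of_nat (n+j-1)*\<rho>) \<noteq> 0"
  and nG5: "Gamma (1 + \<rho>) \<noteq> 0"
  and nH1: "Gamma ((l1 + l2 + l3 - of_nat k + 2) * \<rho> - 1) \<noteq> 0"
  and nH5: "Gamma (- \<rho>) \<noteq> 0"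
  and nF1: "Gamma ((2 * l1 - of_nat k + 1) * \<rho>) \<noteq> 0"
  and nF2: "Gamma ((2 * l2 - of_nat k + 1) * \<rho>) \<noteq> 0"
  and nF3: "Gamma (- of_nat k * \<rho>) \<noteq> 0"
  shows "((1 - qp \<rho> (2 * of_nat k)) *
       (qp \<rho> (2 * (l1 - of_nat k + 1)) - qp \<rho> (- 2 * l1)) / (1 - qp \<rho> 2)) *
     ((qp \<rho> (- 2 * l2) - qp \<rho> (2 * (l2 - of_nat j))) /
       (qp \<rho> (2 * (1 + l1 + l2 - of_nat n)) - qp \<rho> (- 2 * (l1 + l2 - of_nat j)))) *
     (Gamma ((1 - 2*l1*\<rho>) + of_nat j * \<rho>) * Gamma ((1 - 2*l2*\<rho>) + of_nat j * \<rho>) * Gamma (1 + of_nat (j + 1) * \<rho>)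
             / (Gamma ((1 - 2*l1*\<rho>) + (1 - 2*l2*\<rho>) + of_nat (n + j - 1) * \<rho>) * Gamma (1 + \<rho>)))
   = qp \<rho> (of_nat n - 1 - 2 * of_nat j) * (2 * of_real pi * \<i> *
      (Gamma ((l1 + l2 + l3 - of_nat k + 2) * \<rho> - 1) * Gamma (- \<rho>) /
          (Gamma ((2 * l1 - of_nat k + 1) * \<rho>) * Gamma ((2 * l2 - of_nat k + 1) * \<rho>)
           * Gamma (- of_nat k * \<rho>))))"
proof -
  have kj: "(of_nat k :: complex) = of_nat j + 1" using k by simp
  have nj: "(of_nat (n+j-1) :: complex) = of_nat n + of_nat j - 1" using jn by (simp add: of_nat_diff)
  have nj2: "(of_nat (j + n - Suc 0) :: complex) = of_nat n + of_nat j - 1" using jn by (simp add: of_nat_diff)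
  define sk where "sk = sin (of_real pi * (of_nat k * \<rho>))"
  define sa1 where "sa1 = sin (of_real pi * ((2 * l1 - of_nat k + 1) * \<rho>))"
  define sa2 where "sa2 = sin (of_real pi * ((2 * l2 - of_nat k + 1) * \<rho>))"
  define sc where "sc = sin (of_real pi * ((l1 + l2 + l3 - of_nat k + 2) * \<rho>))"
  define s1 where "s1 = sin (of_real pi * \<rho>)"
  have q0: "qp \<rho> 0 = 1" by (simp add: qp_def)
  have A1: "1 - qp \<rho> (2 * of_nat k) = -(qp \<rho> (of_nat k) * (2 * \<i> * sk))"
    using qp_diff2[of 0 "2 * of_nat k" "of_nat k" \<rho> "-(of_nat k * \<rho>)"] q0
    by (simp add: sk_def algebra_simps)
  have A2: "qp \<rho> (2 * (l1 - of_nat k + 1)) - qp \<rho> (- 2 * l1) = qp \<rho> (1 - of_nat k) * (2 * \<i> * sa1)"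
    using qp_diff2[of "2 * (l1 - of_nat k + 1)" "- 2 * l1" "1 - of_nat k" \<rho> "(2 * l1 - of_nat k + 1) * \<rho>"]
    by (simp add: sa1_def algebra_simps)
  have A3: "1 - qp \<rho> 2 = -(qp \<rho> 1 * (2 * \<i> * s1))"
    using qp_diff2[of 0 2 1 \<rho> "-\<rho>"] q0
    by (simp add: s1_def algebra_simps)
  have B1: "qp \<rho> (- 2 * l2) - qp \<rho> (2 * (l2 - of_nat j)) = -(qp \<rho> (- of_nat j) * (2 * \<i> * sa2))"
  proof -
    have "qp \<rho> (2 * (l2 - of_nat j)) - qp \<rho> (- 2 * l2) = qp \<rho> (- of_nat j) * (2 * \<i> * sa2)"
      using qp_diff2[of "2 * (l2 - of_nat j)" "- 2 * l2" "- of_nat j" \<rho> "((2 * l2 - of_nat k + 1) * \<rho>)"]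
      by (simp add: sa2_def kj algebra_simps)
    thus ?thesis by (simp add: algebra_simps)
  qed
  have B2: "qp \<rho> (2 * (1 + l1 + l2 - of_nat n)) - qp \<rho> (- 2 * (l1 + l2 - of_nat j))
      = qp \<rho> (1 - of_nat n + of_nat j) * (2 * \<i> * sc)"
    using qp_diff2[of "2 * (1 + l1 + l2 - of_nat n)" "- 2 * (l1 + l2 - of_nat j)" "1 - of_nat n + of_nat j" \<rho>
        "(l1 + l2 + l3 - of_nat k + 2) * \<rho>"]
    by (simp add: sc_def kj l3 algebra_simps)
  have R1: "Gamma (1 - 2*l1*\<rho> + of_nat j * \<rho>) = of_real pi / (sa1 * Gamma ((2 * l1 - of_nat k + 1) * \<rho>)) \<and> sa1 \<noteq> 0"
    by (rule refl_inst) (use nF1 nG1 in \<open>simp_all add: sa1_def kj algebra_simps\<close>)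
  have R2: "Gamma (1 - 2*l2*\<rho> + of_nat j * \<rho>) = of_real pi / (sa2 * Gamma ((2 * l2 - of_nat k + 1) * \<rho>)) \<and> sa2 \<noteq> 0"
    by (rule refl_inst) (use nF2 nG2 in \<open>simp_all add: sa2_def kj algebra_simps\<close>)
  have R3: "Gamma (1 + of_nat (j+1) * \<rho>) = of_real pi / (-sk * Gamma (- of_nat k * \<rho>)) \<and> -sk \<noteq> 0"
  proof (rule refl_inst)
    have "of_real pi * (- of_nat k * \<rho>) = -(of_real pi*(of_nat k*\<rho>))" by simp
    then show "sin (of_real pi * (- of_nat k * \<rho>)) = - sk" unfolding sk_def by (simp only: sin_minus)
  qed (use nF3 nG3 k in \<open>simp_all add: algebra_simps\<close>)
  have R4: "Gamma ((1 - 2*l1*\<rho>) + (1 - 2*l2*\<rho>) + of_nat (n+j-1)*\<rho>) = of_real pi / (-sc * Gamma ((l1 + l2 + l3 - of_nat k + 2) * \<rho> - 1)) \<and> -sc \<noteq> 0"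
  proof (rule refl_inst)
    show "1 - ((l1 + l2 + l3 - of_nat k + 2) * \<rho> - 1) = (1 - 2*l1*\<rho>) + (1 - 2*l2*\<rho>) + of_nat (n+j-1)*\<rho>"
      by (simp add: nj nj2 kj l3 algebra_simps)
    show "sin (of_real pi * ((l1 + l2 + l3 - of_nat k + 2) * \<rho> - 1)) = - sc"
      unfolding sc_def by (simp add: right_diff_distrib sin_diff)
  qed (use nH1 nG4 in auto)
  have R5: "Gamma (1 + \<rho>) = of_real pi / (-s1 * Gamma (- \<rho>)) \<and> -s1 \<noteq> 0"
    by (rule refl_inst) (use nH5 nG5 in \<open>simp_all add: s1_def\<close>)
  have ph: "qp \<rho> (of_nat k) * qp \<rho> (1 - of_nat k) * qp \<rho> (- of_nat j)
     = qp \<rho> (of_nat n - 1 - 2 * of_nat j) * qp \<rho> 1 * qp \<rho> (1 - of_nat n + of_nat j)"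
    by (simp add: qp_mult kj algebra_simps)
  have C: "((-(qp \<rho> (of_nat k)*(2 * \<i> * sk)))*(qp \<rho> (1 - of_nat k)*(2 * \<i> * sa1))/(-(qp \<rho> 1*(2 * \<i> * s1)))) *
     ((-(qp \<rho> (- of_nat j)*(2 * \<i> * sa2)))/(qp \<rho> (1 - of_nat n + of_nat j)*(2 * \<i> * sc))) *
     ((of_real pi/(sa1*Gamma ((2 * l1 - of_nat k + 1) * \<rho>)))*(of_real pi/(sa2*Gamma ((2 * l2 - of_nat k + 1) * \<rho>)))
      *(of_real pi/(-sk*Gamma (- of_nat k * \<rho>))) /
      ((of_real pi/(-sc*Gamma ((l1 + l2 + l3 - of_nat k + 2) * \<rho> - 1)))*(of_real pi/(-s1*Gamma (- \<rho>)))))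
   = qp \<rho> (of_nat n - 1 - 2 * of_nat j)*(2* of_real pi * \<i>*(Gamma ((l1 + l2 + l3 - of_nat k + 2) * \<rho> - 1)*Gamma (- \<rho>)
      /(Gamma ((2 * l1 - of_nat k + 1) * \<rho>)*Gamma ((2 * l2 - of_nat k + 1) * \<rho>)*Gamma (- of_nat k * \<rho>))))"
    by (rule core) (use R1 R2 R3 R4 R5 nF1 nF2 nF3 nH1 nH5 ph in \<open>simp_all add: qp_ne\<close>)
  show ?thesis
    unfolding A1 A2 A3 B1 B2 using R1 R2 R3 R4 R5 C by simp
qed
lemma Ints_norm_ge1: fixes u :: complex assumes "u \<in> \<int>" "u \<noteq> 0" shows "norm u \<ge> 1"
proof -
  from assms obtain m where m: "u = of_int m" by (auto elim: Ints_cases)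
  with assms have "m \<noteq> 0" by auto
  thus ?thesis using m by simp
qed

lemma ev_notInt:
  fixes c d z :: complex assumes "c \<noteq> 0"
  shows "\<forall>\<^sub>F \<rho> in at z. c*\<rho> + d \<notin> \<int>"
proof (cases "c*z + d \<in> \<int>")
  case True
  have "\<exists>e>0. \<forall>\<rho>\<in>UNIV. \<rho> \<noteq> z \<and> dist \<rho> z < e \<longrightarrow> c*\<rho> + d \<notin> \<int>"
  proof (intro exI conjI ballI impI)
    show "1 / norm c > 0" using assms by simp
    fix \<rho> assume h: "\<rho> \<noteq> z \<and> dist \<rho> z < 1 / norm c"
    show "c*\<rho> + d \<notin> \<int>"
    proof
      assume i: "c*\<rho> + d \<in> \<int>"
      have e: "(c*\<rho> + d) - (c*z + d) = c*(\<rho> - z)" by (simp add: algebra_simps)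
      have "(c*\<rho> + d) - (c*z + d) \<in> \<int>" using i True by (rule Ints_diff)
      moreover have "c*(\<rho> - z) \<noteq> 0" using h assms by simp
      ultimately have "norm (c*(\<rho> - z)) \<ge> 1" using e Ints_norm_ge1 by metis
      moreover have "norm (c*(\<rho> - z)) < 1"
      proof -
        have "norm (c*(\<rho> - z)) = norm c * dist \<rho> z" by (simp add: norm_mult dist_norm)
        also have "\<dots> < norm c * (1 / norm c)" using h assms by (intro mult_strict_left_mono) auto
        also have "\<dots> = 1" using assms by simp
        finally show ?thesis .
      qed
      ultimately show False by simp
    qed
  qed
  thus ?thesis by (simp only: eventually_at)
next
  case False
  have t: "((\<lambda>\<rho>. c*\<rho> + d) \<longlongrightarrow> c*z + d) (at z)" by (intro tendsto_intros)
  have "open (- \<int> :: complex set)" by (simp add: open_Compl)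
  from topological_tendstoD[OF t this] False show ?thesis by simp
qed

lemma ev_Gamma_nz:
  fixes c d z :: complex and f :: "complex \<Rightarrow> complex"
  assumes "c \<noteq> 0" "\<And>\<rho>. f \<rho> = c*\<rho> + d"
  shows "\<forall>\<^sub>F \<rho> in at z. Gamma (f \<rho>) \<noteq> 0"
  using ev_notInt[OF assms(1), where z=z and d=d]
  by eventually_elim (use assms(2) nonpos_Ints_subset_Ints in \<open>auto simp: Gamma_eq_zero_iff\<close>)

lemma sum_phase: "(\<Sum>j<n. (of_nat n - 1 - 2 * of_nat j :: complex)) = 0"
proof -
  have "(\<Sum>j<n. 2 * of_nat j :: complex) = of_nat n * (of_nat n - 1)"
    by (induction n) (simp_all add: algebra_simps)
  thus ?thesis by (simp add: sum_subtractf)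
qed

lemma prod_phase: "(\<Prod>j<n. qp r (of_nat n - 1 - 2 * of_nat j)) = 1"
proof -
  have "(\<Prod>j<n. qp r (of_nat n - 1 - 2 * of_nat j)) = exp (\<Sum>j<n. \<i> * of_real pi * r * (of_nat n - 1 - 2 * of_nat j))"
    unfolding qp_def by (simp add: exp_sum)
  also have "(\<Sum>j<n. \<i> * of_real pi * r * (of_nat n - 1 - 2 * of_nat j)) = \<i> * of_real pi * r * (\<Sum>j<n. (of_nat n - 1 - 2 * of_nat j :: complex))"
    by (simp add: sum_distrib_left)
  finally show ?thesis by (simp add: sum_phase)
qed

definition goodP :: "complex \<Rightarrow> complex \<Rightarrow> complex \<Rightarrow> nat \<Rightarrow> complex \<Rightarrow> bool" where
  "goodP l1 l2 l3 n \<rho> \<longleftrightarrow> (\<forall>j\<in>{..<n}.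
      Gamma (1 - 2*l1*\<rho> + of_nat j * \<rho>) \<noteq> 0 \<and>
      Gamma (1 - 2*l2*\<rho> + of_nat j * \<rho>) \<noteq> 0 \<and>
      Gamma (1 + of_nat (j+1) * \<rho>) \<noteq> 0 \<and>
      Gamma ((1 - 2*l1*\<rho>) + (1 - 2*l2*\<rho>) + of_nat (n+j-1)*\<rho>) \<noteq> 0 \<and>
      Gamma (1 + \<rho>) \<noteq> 0 \<and>
      Gamma ((l1 + l2 + l3 - of_nat (Suc j) + 2) * \<rho> - 1) \<noteq> 0 \<and>
      Gamma (- \<rho>) \<noteq> 0 \<and>
      Gamma ((2 * l1 - of_nat (Suc j) + 1) * \<rho>) \<noteq> 0 \<and>
      Gamma ((2 * l2 - of_nat (Suc j) + 1) * \<rho>) \<noteq> 0 \<and>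
      Gamma (- of_nat (Suc j) * \<rho>) \<noteq> 0)"

lemma aux_nat:
  fixes m1 m2 m3 :: nat and l1 l2 l3 :: complex and n :: nat
  assumes "l1 = of_nat m1 / 2" and "l2 = of_nat m2 / 2" and "l3 = of_nat m3 / 2"
    and "m1 \<le> m2 + m3" and "m2 \<le> m1 + m3" and "m3 \<le> m1 + m2"
    and "even (m1 + m2 + m3)"
    and "n = (m1 + m2 - m3) div 2"
  shows "m1 + m2 = m3 + 2*n" "n \<le> m1" "n \<le> m2" "(of_nat m1 + of_nat m2 :: complex) = of_nat m3 + 2 * of_nat n"
    "l3 = l1 + l2 - of_nat n"
proof -
  show mn: "m1 + m2 = m3 + 2*n" using assms(4-8) by presburger
  show "n \<le> m1" "n \<le> m2" using mn assms(4,5) by linarith+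
  show mnc: "(of_nat m1 + of_nat m2 :: complex) = of_nat m3 + 2 * of_nat n"
    using arg_cong[OF mn, of "of_nat :: nat \<Rightarrow> complex"] by simp
  have m3e: "(of_nat m3 :: complex) = of_nat m1 + of_nat m2 - 2 * of_nat n" using mnc by (simp add: algebra_simps)
  show "l3 = l1 + l2 - of_nat n" unfolding assms(1-3) m3e by (simp add: field_simps)
qed

lemma ev_good:
  fixes m1 m2 m3 :: nat and l1 l2 l3 :: complex and n :: nat
  assumes "l1 = of_nat m1 / 2" and "l2 = of_nat m2 / 2" and "l3 = of_nat m3 / 2"
    and "m1 \<le> m2 + m3" and "m2 \<le> m1 + m3" and "m3 \<le> m1 + m2"
    and "even (m1 + m2 + m3)"
    and "n = (m1 + m2 - m3) div 2"
  shows "\<forall>\<^sub>F \<rho> in at z. goodP l1 l2 l3 n \<rho>"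
  unfolding goodP_def
proof (intro eventually_ball_finite ballI finite_lessThan)
  note an = aux_nat[OF assms]
  have mn: "m1 + m2 = m3 + 2*n" and nm1: "n \<le> m1" and nm2: "n \<le> m2" and mnc: "(of_nat m1 + of_nat m2 :: complex) = of_nat m3 + 2 * of_nat n"
    and l3: "l3 = l1 + l2 - of_nat n" using an by auto
    fix j assume "j \<in> {..<n}"
    hence jn: "j < n" by simp
    have nj2: "(of_nat (n + j - 1) :: complex) = of_nat n + of_nat j - 1" using jn by (simp add: of_nat_diff)
    have "n+j-1 \<noteq> m1+m2" using jn mn by linarith
    hence c4: "(of_nat (n+j-1) - of_nat (m1+m2) :: complex) \<noteq> 0" by (metis right_minus_eq of_nat_eq_iff)
    have "m3+n+1 \<noteq> j" using jn by linarith
    hence c6: "(of_nat (m3+n+1) - of_nat (j) :: complex) \<noteq> 0" by (metis right_minus_eq of_nat_eq_iff)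
    have "j \<noteq> m1" using jn nm1 by linarith
    hence c1: "(of_nat (j) - of_nat (m1) :: complex) \<noteq> 0" by (metis right_minus_eq of_nat_eq_iff)
    have "j \<noteq> m2" using jn nm2 by linarith
    hence c2: "(of_nat (j) - of_nat (m2) :: complex) \<noteq> 0" by (metis right_minus_eq of_nat_eq_iff)
    have "m1 \<noteq> j" using jn nm1 by linarith
    hence c8: "(of_nat (m1) - of_nat (j) :: complex) \<noteq> 0" by (metis right_minus_eq of_nat_eq_iff)
    have "m2 \<noteq> j" using jn nm2 by linarith
    hence c9: "(of_nat (m2) - of_nat (j) :: complex) \<noteq> 0" by (metis right_minus_eq of_nat_eq_iff)
    have c3: "(of_nat (Suc j)::complex) \<noteq> 0" by (metis of_nat_eq_0_iff nat.distinct(1))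
    have c10: "- (of_nat (Suc j)::complex) \<noteq> 0" using c3 by (simp only: neg_equal_0_iff_equal) simp
    show "\<forall>\<^sub>F \<rho> in at z.
      Gamma (1 - 2*l1*\<rho> + of_nat j * \<rho>) \<noteq> 0 \<and>
      Gamma (1 - 2*l2*\<rho> + of_nat j * \<rho>) \<noteq> 0 \<and>
      Gamma (1 + of_nat (j+1) * \<rho>) \<noteq> 0 \<and>
      Gamma ((1 - 2*l1*\<rho>) + (1 - 2*l2*\<rho>) + of_nat (n+j-1)*\<rho>) \<noteq> 0 \<and>
      Gamma (1 + \<rho>) \<noteq> 0 \<and>
      Gamma ((l1 + l2 + l3 - of_nat (Suc j) + 2) * \<rho> - 1) \<noteq> 0 \<and>
      Gamma (- \<rho>) \<noteq> 0 \<and>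
      Gamma ((2 * l1 - of_nat (Suc j) + 1) * \<rho>) \<noteq> 0 \<and>
      Gamma ((2 * l2 - of_nat (Suc j) + 1) * \<rho>) \<noteq> 0 \<and>
      Gamma (- of_nat (Suc j) * \<rho>) \<noteq> 0"
      apply (intro eventually_conj)
      subgoal by (rule ev_Gamma_nz[OF c1, where d=1]) (simp add: assms(1) algebra_simps)
      subgoal by (rule ev_Gamma_nz[OF c2, where d=1]) (simp add: assms(2) algebra_simps)
      subgoal by (rule ev_Gamma_nz[OF c3, where d=1]) (simp add: algebra_simps)
      subgoal by (rule ev_Gamma_nz[OF c4, where d=2]) (simp add: assms(1,2) algebra_simps)
      subgoal by (rule ev_Gamma_nz[where c=1 and d=1]) simp_all
      subgoal by (rule ev_Gamma_nz[OF c6, where d="-1"]) (use mnc in \<open>simp add: l3 assms(1,2) field_simps\<close>)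
      subgoal by (rule ev_Gamma_nz[where c="-1" and d=0]) simp_all
      subgoal by (rule ev_Gamma_nz[OF c8, where d=0]) (simp add: assms(1) algebra_simps)
      subgoal by (rule ev_Gamma_nz[OF c9, where d=0]) (simp add: assms(2) algebra_simps)
      subgoal by (rule ev_Gamma_nz[OF c10, where d=0]) simp
      done
qed

lemma pointwise:
  fixes l1 l2 l3 \<rho> :: complex and n :: nat
  assumes l3: "l3 = l1 + l2 - of_nat n" and elim: "goodP l1 l2 l3 n \<rho>"
  shows "A_fun l1 n \<rho> * (alpha_fun l1 l2 n \<rho> / of_nat (fact n)) *
       selberg n (1 - 2 * l1 * \<rho>) (1 - 2 * l2 * \<rho>) \<rho>
     = (2 * of_real pi * \<i>) ^ n / of_nat (fact n) *
       (\<Prod>k=1..n. Gamma ((l1 + l2 + l3 - of_nat k + 2) * \<rho> - 1) * Gamma (- \<rho>) /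
          (Gamma ((2 * l1 - of_nat k + 1) * \<rho>) * Gamma ((2 * l2 - of_nat k + 1) * \<rho>)
           * Gamma (- of_nat k * \<rho>)))"
proof -
    define Af where "Af k = (1 - qp \<rho> (2 * of_nat k)) *
       (qp \<rho> (2 * (l1 - of_nat k + 1)) - qp \<rho> (- 2 * l1)) / (1 - qp \<rho> 2)" for k :: nat
    define al where "al j = (qp \<rho> (- 2 * l2) - qp \<rho> (2 * (l2 - of_nat j))) /
       (qp \<rho> (2 * (1 + l1 + l2 - of_nat n)) - qp \<rho> (- 2 * (l1 + l2 - of_nat j)))" for j :: nat
    define S where "S j = Gamma ((1 - 2*l1*\<rho>) + of_nat j * \<rho>) * Gamma ((1 - 2*l2*\<rho>) + of_nat j * \<rho>) * Gamma (1 + of_nat (j + 1) * \<rho>)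
             / (Gamma ((1 - 2*l1*\<rho>) + (1 - 2*l2*\<rho>) + of_nat (n + j - 1) * \<rho>) * Gamma (1 + \<rho>))" for j :: nat
    define R where "R k = Gamma ((l1 + l2 + l3 - of_nat k + 2) * \<rho> - 1) * Gamma (- \<rho>) /
          (Gamma ((2 * l1 - of_nat k + 1) * \<rho>) * Gamma ((2 * l2 - of_nat k + 1) * \<rho>)
           * Gamma (- of_nat k * \<rho>))" for k :: nat
    define ph where "ph j = qp \<rho> (of_nat n - 1 - 2 * of_nat j)" for j :: nat
    have one: "{1..n} = {Suc 0..n}" by simp
    have eA: "A_fun l1 n \<rho> = (\<Prod>j<n. Af (Suc j))"
      unfolding A_fun_def Af_def one prod.atLeast1_atMost_eq ..
    have eal: "alpha_fun l1 l2 n \<rho> = (\<Prod>j<n. al j)" unfolding alpha_fun_def al_def ..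
    have eS: "selberg n (1 - 2 * l1 * \<rho>) (1 - 2 * l2 * \<rho>) \<rho> = (\<Prod>j<n. S j)" unfolding selberg_def S_def ..
    have eR: "(\<Prod>k=1..n. Gamma ((l1 + l2 + l3 - of_nat k + 2) * \<rho> - 1) * Gamma (- \<rho>) /
          (Gamma ((2 * l1 - of_nat k + 1) * \<rho>) * Gamma ((2 * l2 - of_nat k + 1) * \<rho>)
           * Gamma (- of_nat k * \<rho>))) = (\<Prod>j<n. R (Suc j))"
      unfolding R_def one prod.atLeast1_atMost_eq ..
    have pj: "Af (Suc j) * al j * S j = ph j * (2 * of_real pi * \<i> * R (Suc j))" if "j \<in> {..<n}" for j
      unfolding Af_def al_def S_def ph_def R_def
      by (rule perj[OF refl _ l3]) (use that elim in \<open>simp_all add: goodP_def\<close>)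
    have "(\<Prod>j<n. Af (Suc j)) * (\<Prod>j<n. al j) * (\<Prod>j<n. S j) = (\<Prod>j<n. Af (Suc j) * al j * S j)"
      by (simp add: prod.distrib)
    also have "\<dots> = (\<Prod>j<n. ph j * (2 * of_real pi * \<i> * R (Suc j)))" using pj by (rule prod.cong[OF refl])
    also have "\<dots> = (\<Prod>j<n. ph j) * ((2 * of_real pi * \<i>) ^ n * (\<Prod>j<n. R (Suc j)))"
      by (simp add: prod.distrib)
    also have "(\<Prod>j<n. ph j) = 1" unfolding ph_def by (rule prod_phase)
    finally have main: "(\<Prod>j<n. Af (Suc j)) * (\<Prod>j<n. al j) * (\<Prod>j<n. S j) = (2 * of_real pi * \<i>) ^ n * (\<Prod>j<n. R (Suc j))" by simp
    show ?thesis unfolding eA eal eS eR using main by (simp add: field_simps)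
qed

theorem mainTheorem5:
  fixes m1 m2 m3 :: nat and l1 l2 l3 :: complex and n :: nat
  assumes "l1 = of_nat m1 / 2" and "l2 = of_nat m2 / 2" and "l3 = of_nat m3 / 2"
    and "m1 \<le> m2 + m3" and "m2 \<le> m1 + m3" and "m3 \<le> m1 + m2"
    and "even (m1 + m2 + m3)"
    and "n = (m1 + m2 - m3) div 2"
  shows "\<forall>z. \<forall>\<^sub>F \<rho> in at z.
     A_fun l1 n \<rho> * (alpha_fun l1 l2 n \<rho> / of_nat (fact n)) *
       selberg n (1 - 2 * l1 * \<rho>) (1 - 2 * l2 * \<rho>) \<rho>
     = (2 * of_real pi * \<i>) ^ n / of_nat (fact n) *
       (\<Prod>k=1..n. Gamma ((l1 + l2 + l3 - of_nat k + 2) * \<rho> - 1) * Gamma (- \<rho>) /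
          (Gamma ((2 * l1 - of_nat k + 1) * \<rho>) * Gamma ((2 * l2 - of_nat k + 1) * \<rho>)
           * Gamma (- of_nat k * \<rho>)))"
proof (intro allI)
  fix z :: complex
  have l3: "l3 = l1 + l2 - of_nat n" using aux_nat[OF assms] by auto
  show "\<forall>\<^sub>F \<rho> in at z. A_fun l1 n \<rho> * (alpha_fun l1 l2 n \<rho> / of_nat (fact n)) *
       selberg n (1 - 2 * l1 * \<rho>) (1 - 2 * l2 * \<rho>) \<rho>
     = (2 * of_real pi * \<i>) ^ n / of_nat (fact n) *
       (\<Prod>k=1..n. Gamma ((l1 + l2 + l3 - of_nat k + 2) * \<rho> - 1) * Gamma (- \<rho>) /
          (Gamma ((2 * l1 - of_nat k + 1) * \<rho>) * Gamma ((2 * l2 - of_nat k + 1) * \<rho>)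
           * Gamma (- of_nat k * \<rho>)))"
    using ev_good[OF assms, of z] by (rule eventually_mono) (rule pointwise[OF l3])
qed

end
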